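(* Every supertropical semiring is fully elementary.
   Context: A semiring $(X,+,0,\cdot)$: $(X,+,0)$ commutative monoid, $(X,\cdot)$ semigroup, distributivity, $0$ absorbing. For a unital semiring define $\nu:X\to X$, $\nu(x)=x+x$. A supertropical semiring is a unital commutative semiring $X$ such that $2=4$ in $X$ (where $n$ denotes $1+\dots+1$), for all $a,b\in X$ with $\nu(a)\ne\nu(b)$ one has $a+b\in\{a,b\}$, and for all $a,b$ with $\nu(a)=\nu(b)$ one has $a+b=\nu(a)$. Polynomials in $n$ variables are functions $X^n\to X$ represented by formal expressions $\sum_k a_k\prod_{j=1}^n x_j^{d_{k,j}}$ ($a_k\in X$). A polynomial is symmetric if represented by an expression which, with each monomial $a_k\prod_j x_j^{d_{k,j}}$, contains all monomials $a_k\prod_j x_{\sigma(j)}^{d_{k,j}}$, $\sigma\in S_n$ (up to reordering factors). $e_j$ is the sum of all products of $j$ distinct variables among $x_1,\dots,x_n$. $X$ is $n$-elementary if every symmetric polynomial $p$ in $n$ variables equals $r(e_1,\dots,e_n)$ as functions on $X^n$ for some polynomial $r$; fully elementary if $n$-elementary for all $n\in\mathbb{N}$. *)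

theory Defs
  imports "HOL-Combinatorics.Permutations"
begin

text \<open>Unital commutative semirings are the types of sort
  {comm_semiring_0, comm_monoid_mult} (no requirement 0 \<noteq> 1).\<close>

definition supertropical :: "'a::{comm_semiring_0, comm_monoid_mult} itself \<Rightarrow> bool" where
  "supertropical _ \<longleftrightarrow>
     ((1::'a) + 1 = 1 + 1 + 1 + 1) \<and>
     (\<forall>a b::'a. a + a \<noteq> b + b \<longrightarrow> (a + b = a \<or> a + b = b)) \<and>
     (\<forall>a b::'a. a + a = b + b \<longrightarrow> a + b = a + a)"

text \<open>A formal polynomial expression in n variables x_0..x_{n-1}: a finite set of
  monomials (a, d), standing for a * prod_{j<n} x_j ^ d j.\<close>

definition poly_eval :: "('a::{comm_semiring_0, comm_monoid_mult} \<times> (nat \<Rightarrow> nat)) set \<Rightarrow> nat \<Rightarrow> (nat \<Rightarrow> 'a) \<Rightarrow> 'a" where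
  "poly_eval P n x = (\<Sum>(a, d)\<in>P. a * (\<Prod>j<n. x j ^ d j))"

definition symmetric_expr :: "nat \<Rightarrow> ('a \<times> (nat \<Rightarrow> nat)) set \<Rightarrow> bool" where
  "symmetric_expr n P \<longleftrightarrow> finite P \<and>
     (\<forall>a d \<sigma>. (a, d) \<in> P \<longrightarrow> \<sigma> permutes {..<n} \<longrightarrow> (a, d \<circ> \<sigma>) \<in> P)"

definition elem_sym :: "nat \<Rightarrow> nat \<Rightarrow> (nat \<Rightarrow> 'a::{comm_semiring_0, comm_monoid_mult}) \<Rightarrow> 'a" where
  "elem_sym n j x = (\<Sum>S\<in>{S. S \<subseteq> {..<n} \<and> card S = j}. \<Prod>i\<in>S. x i)"

definition n_elementary :: "'a::{comm_semiring_0, comm_monoid_mult} itself \<Rightarrow> nat \<Rightarrow> bool" where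
  "n_elementary _ n \<longleftrightarrow>
     (\<forall>P::('a \<times> (nat \<Rightarrow> nat)) set. symmetric_expr n P \<longrightarrow>
        (\<exists>R::('a \<times> (nat \<Rightarrow> nat)) set. finite R \<and>
           (\<forall>x. poly_eval P n x = poly_eval R n (\<lambda>i. elem_sym n (Suc i) x))))"

definition fully_elementary :: "'a::{comm_semiring_0, comm_monoid_mult} itself \<Rightarrow> bool" where
  "fully_elementary T \<longleftrightarrow> (\<forall>n. n_elementary T n)"

end

theory Submission
  imports Defs
begin


definition nu :: "'a::{comm_semiring_0, comm_monoid_mult} \<Rightarrow> 'a" where "nu a = a + a"

definition ge :: "'a::{comm_semiring_0, comm_monoid_mult} \<Rightarrow> 'a \<Rightarrow> bool" where "ge a b \<longleftrightarrow> nu a + nu b = nu a"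
definition sdom :: "'a::{comm_semiring_0, comm_monoid_mult} \<Rightarrow> 'a \<Rightarrow> bool" where "sdom a b \<longleftrightarrow> a + b = a"
definition wdom :: "'a::{comm_semiring_0, comm_monoid_mult} \<Rightarrow> 'a \<Rightarrow> bool" where "wdom a b \<longleftrightarrow> a = b \<or> a + b = a"
definition Q :: "'a::{comm_semiring_0, comm_monoid_mult} \<Rightarrow> 'a \<Rightarrow> bool" where "Q F g \<longleftrightarrow> F = g \<or> F = nu g"

context
  assumes ST: "supertropical TYPE('a::{comm_semiring_0, comm_monoid_mult})"
begin

lemma four_two: "(a::'a) + a + a + a = a + a"
proof -
  have "(1::'a) + 1 = 1 + 1 + 1 + 1" using ST unfolding supertropical_def by blast
  hence "a * (1 + 1) = a * (1 + 1 + 1 + 1)" by simp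
  thus ?thesis by (simp add: distrib_left add.assoc)
qed

lemma nu_nu: "nu (nu (a::'a)) = nu a"
  unfolding nu_def using four_two by (simp add: add.assoc)

lemma nu_mult: "nu ((a::'a) * b) = nu a * b"
  unfolding nu_def by (simp add: distrib_right)

lemma nu_mult2: "nu ((a::'a) * b) = a * nu b"
  unfolding nu_def by (simp add: distrib_left)

lemma nu_nu_mult: "nu (a::'a) * nu b = nu (a * b)"
  by (metis nu_mult nu_mult2 nu_nu)

lemma dich: "nu (a::'a) \<noteq> nu b \<Longrightarrow> a + b = a \<or> a + b = b"
  using ST unfolding supertropical_def nu_def by blast

lemma tie: "nu (a::'a) = nu b \<Longrightarrow> a + b = nu a"
  using ST unfolding supertropical_def nu_def by metis

lemma nu_add: "nu ((a::'a) + b) = nu a + nu b"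
  unfolding nu_def by (simp add: ac_simps)


lemma ge_refl: "ge (a::'a) a"
  unfolding ge_def using nu_nu by (simp add: nu_def)

lemma ge_trans: "ge (a::'a) b \<Longrightarrow> ge b c \<Longrightarrow> ge a c"
  unfolding ge_def by (metis add.assoc)

lemma ge_antisym: "ge (a::'a) b \<Longrightarrow> ge b a \<Longrightarrow> nu a = nu b"
  unfolding ge_def by (metis add.commute)

lemma ge_total: "ge (a::'a) b \<or> ge b a"
proof (cases "nu a = nu b")
  case True thus ?thesis using ge_refl unfolding ge_def by metis
next
  case False
  hence "nu (nu a) \<noteq> nu (nu b)" by (simp add: nu_nu)
  from dich[OF this] show ?thesis unfolding ge_def by (metis add.commute)
qed

lemma ge_mult: "ge (a::'a) b \<Longrightarrow> ge (a * c) (b * c)"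
  unfolding ge_def by (metis nu_mult distrib_right)

lemma ge_mult2: "ge (a::'a) b \<Longrightarrow> ge (c * a) (c * b)"
  using ge_mult by (metis mult.commute)

lemma ge_strict: "ge (a::'a) b \<Longrightarrow> nu a \<noteq> nu b \<Longrightarrow> a + b = a"
  using dich[of a b] unfolding ge_def by (metis nu_add)

lemma ge_absorb: "ge (a::'a) b \<Longrightarrow> nu a + b = nu a"
proof (cases "nu b = nu a")
  case True
  hence "nu (nu a) = nu b" by (simp add: nu_nu)
  from tie[OF this] show ?thesis by (simp add: nu_nu)
next
  case False
  assume g: "ge a b"
  have "ge (nu a) b" using g unfolding ge_def by (simp add: nu_nu)
  moreover have "nu (nu a) \<noteq> nu b" using False by (simp add: nu_nu)
  ultimately show ?thesis by (rule ge_strict)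
qed

lemma absorb_sum: "(\<And>i. i \<in> J \<Longrightarrow> u + t i = u) \<Longrightarrow> u + sum t J = (u::'a)"
proof (induction J rule: infinite_finite_induct)
  case (insert x F)
  thus ?case by (metis add.assoc sum.insert insertI1 insertI2)
qed auto

lemma sum_top:
  assumes "finite I" "i0 \<in> I" "\<And>i. i \<in> I \<Longrightarrow> ge (t i0) (t i)"
  shows "(\<forall>i\<in>I-{i0}. nu (t i) \<noteq> nu (t i0)) \<Longrightarrow> sum t I = (t i0 :: 'a)"
    and "i1 \<in> I \<Longrightarrow> i1 \<noteq> i0 \<Longrightarrow> nu (t i1) = nu (t i0) \<Longrightarrow> sum t I = nu (t i0)"
    and "sum t I = t i0 \<or> sum t I = nu (t i0)"
proof -
  have s: "sum t I = t i0 + sum t (I - {i0})" using assms by (simp add: sum.remove)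
  show a: "(\<forall>i\<in>I-{i0}. nu (t i) \<noteq> nu (t i0)) \<Longrightarrow> sum t I = t i0"
    unfolding s by (rule absorb_sum) (metis assms(3) ge_strict DiffD1)
  have b: "\<And>j. j \<in> I \<Longrightarrow> j \<noteq> i0 \<Longrightarrow> nu (t j) = nu (t i0) \<Longrightarrow> sum t I = nu (t i0)"
  proof -
    fix i1 assume h: "i1 \<in> I" "i1 \<noteq> i0" "nu (t i1) = nu (t i0)"
    have "sum t (I - {i0}) = t i1 + sum t (I - {i0} - {i1})"
      using h assms by (simp add: sum.remove)
    hence "sum t I = (t i0 + t i1) + sum t (I - {i0} - {i1})" unfolding s by (simp add: add.assoc)
    also have "t i0 + t i1 = nu (t i0)" using tie h by metis
    also have "nu (t i0) + sum t (I - {i0} - {i1}) = nu (t i0)"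
      by (rule absorb_sum) (metis assms(3) ge_absorb DiffD1)
    finally show "sum t I = nu (t i0)" .
  qed
  show "i1 \<in> I \<Longrightarrow> i1 \<noteq> i0 \<Longrightarrow> nu (t i1) = nu (t i0) \<Longrightarrow> sum t I = nu (t i0)" by (rule b)
  show "sum t I = t i0 \<or> sum t I = nu (t i0)"
  proof (cases "\<exists>i\<in>I-{i0}. nu (t i) = nu (t i0)")
    case True then obtain i1 where "i1 \<in> I-{i0}" "nu (t i1) = nu (t i0)" by blast
    thus ?thesis using b by blast
  next
    case False thus ?thesis using a by blast
  qed
qed


lemma sdom_mult: "sdom (a::'a) b \<Longrightarrow> sdom (a * c) (b * c)"
  unfolding sdom_def by (metis distrib_right)

lemma wdom_mult: "wdom (a::'a) b \<Longrightarrow> wdom (a * c) (b * c)"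
  unfolding wdom_def by (metis distrib_right)

lemma sdom_wdom: "sdom (a::'a) b \<Longrightarrow> wdom b c \<Longrightarrow> sdom a c"
  unfolding sdom_def wdom_def by (metis add.assoc)

lemma wdom_dom: "wdom (a::'a) b \<Longrightarrow> sdom b c \<Longrightarrow> sdom a c"
  unfolding sdom_def wdom_def by (metis add.assoc)

lemma wdom_trans: "wdom (a::'a) b \<Longrightarrow> wdom b c \<Longrightarrow> wdom a c"
  unfolding wdom_def by (metis add.assoc)

lemma sdom_prod2: "sdom (a::'a) b \<Longrightarrow> wdom a' b' \<Longrightarrow> sdom (a * a') (b * b')"
proof -
  assume 1: "sdom a b" and 2: "wdom a' b'"
  have "sdom (a * a') (b * a')" using sdom_mult[OF 1] .
  moreover have "wdom (b * a') (b * b')" using wdom_mult[OF 2, of b] by (simp add: mult.commute)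
  ultimately show ?thesis by (rule sdom_wdom)
qed

lemma wdom_prod2: "wdom (a::'a) b \<Longrightarrow> wdom a' b' \<Longrightarrow> wdom (a * a') (b * b')"
proof -
  assume 1: "wdom a b" and 2: "wdom a' b'"
  have "wdom (a * a') (b * a')" using wdom_mult[OF 1] .
  moreover have "wdom (b * a') (b * b')" using wdom_mult[OF 2, of b] by (simp add: mult.commute)
  ultimately show ?thesis by (rule wdom_trans)
qed

lemma wdom_prod: "(\<And>s. s \<in> A \<Longrightarrow> wdom (y s :: 'a) (z s)) \<Longrightarrow> wdom (prod y A) (prod z A)"
proof (induction A rule: infinite_finite_induct)
  case (insert x F) thus ?case by (simp add: wdom_prod2)
qed (auto simp: wdom_def)

lemma sdom_prod:
  assumes "finite A" "s0 \<in> A" "\<And>s. s \<in> A \<Longrightarrow> wdom (y s :: 'a) (z s)" "sdom (y s0) (z s0)"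
  shows "sdom (prod y A) (prod z A)"
proof -
  have "prod y A = y s0 * prod y (A - {s0})" "prod z A = z s0 * prod z (A - {s0})"
    using assms by (simp_all add: prod.remove)
  thus ?thesis using sdom_prod2[OF assms(4) wdom_prod[of "A - {s0}" y z]] assms(3) by auto
qed

lemma wdom_power: "wdom (a::'a) b \<Longrightarrow> wdom (a ^ c) (b ^ c)"
  using wdom_prod[of "{..<c}" "\<lambda>_. a" "\<lambda>_. b"] by simp

lemma sdom_power: "sdom (a::'a) b \<Longrightarrow> c > 0 \<Longrightarrow> sdom (a ^ c) (b ^ c)"
  using sdom_prod[of "{..<c}" 0 "\<lambda>_. a" "\<lambda>_. b"] by (simp add: wdom_def sdom_def)

lemma ge_prod: "(\<And>s. s \<in> A \<Longrightarrow> ge (y s :: 'a) (z s)) \<Longrightarrow> ge (prod y A) (prod z A)"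
proof (induction A rule: infinite_finite_induct)
  case (insert x F)
  hence "ge (y x * prod y F) (z x * prod y F)" "ge (z x * prod y F) (z x * prod z F)"
    by (auto intro: ge_mult ge_mult2)
  thus ?case using insert by (auto intro: ge_trans)
qed (auto simp: ge_refl)

lemma ge_power: "ge (a::'a) b \<Longrightarrow> ge (a ^ c) (b ^ c)"
  using ge_prod[of "{..<c}" "\<lambda>_. a" "\<lambda>_. b"] by simp

lemma nu_prod_eq: "(\<And>s. s \<in> A \<Longrightarrow> nu (y s) = nu (z s)) \<Longrightarrow> nu (prod y A) = nu (prod z A :: 'a)"
proof (induction A rule: infinite_finite_induct)
  case (insert x F)
  have e1: "nu (y x) = nu (z x)" using insert by auto
  have e2: "nu (prod y F) = nu (prod z F)" using insert by auto
  have h1: "nu (y x * prod y F) = nu (z x * prod y F)" by (simp only: nu_mult e1)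
  have h2: "nu (z x * prod y F) = nu (z x * prod z F)" by (simp only: nu_mult2 e2)
  show ?case using insert h1 h2 by simp
qed auto


lemma Q_mult: "Q (F::'a) g \<Longrightarrow> Q F' g' \<Longrightarrow> Q (F * F') (g * g')"
  unfolding Q_def by (elim disjE) (simp_all add: nu_mult2[symmetric] nu_mult[symmetric] nu_nu_mult nu_nu)

lemma Q_prod: "(\<And>s. s \<in> A \<Longrightarrow> Q (y s :: 'a) (z s)) \<Longrightarrow> Q (prod y A) (prod z A)"
proof (induction A rule: infinite_finite_induct)
  case (insert x F) thus ?case by (simp add: Q_mult)
qed (auto simp: Q_def)

lemma Q_power: "Q (F::'a) g \<Longrightarrow> Q (F ^ c) (g ^ c)"
  using Q_prod[of "{..<c}" "\<lambda>_. F" "\<lambda>_. g"] by simp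

lemma Q_nu_mult: "Q (F::'a) g \<Longrightarrow> nu a * F = nu (a * g)"
  unfolding Q_def by (elim disjE) (simp add: nu_mult, simp add: nu_nu_mult)

lemma nu_power: "c > 0 \<Longrightarrow> (nu a) ^ c = nu ((a::'a) ^ c)"
proof (induction c)
  case (Suc c)
  show ?case
  proof (cases c)
    case 0 thus ?thesis by simp
  next
    case (Suc c')
    hence "nu a ^ c = nu (a ^ c)" using Suc.IH by simp
    hence "nu a ^ Suc c = nu a * nu (a ^ c)" by simp
    also have "\<dots> = nu (a ^ Suc c)" by (simp add: nu_nu_mult)
    finally show ?thesis .
  qed
qed auto

lemma Q_prod_ghost:
  assumes "finite A" "l0 \<in> A" "\<And>l. l \<in> A \<Longrightarrow> Q (F l :: 'a) (g l)" "F l0 = nu (g l0)" "c l0 > 0"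
  shows "(\<Prod>l\<in>A. F l ^ c l) = nu (\<Prod>l\<in>A. g l ^ c l)"
proof -
  have q: "Q (\<Prod>l\<in>A-{l0}. F l ^ c l) (\<Prod>l\<in>A-{l0}. g l ^ c l)"
    by (rule Q_prod) (simp add: Q_power assms(3))
  have "(\<Prod>l\<in>A. F l ^ c l) = F l0 ^ c l0 * (\<Prod>l\<in>A-{l0}. F l ^ c l)"
    using assms by (simp add: prod.remove)
  also have "\<dots> = nu (g l0 ^ c l0) * (\<Prod>l\<in>A-{l0}. F l ^ c l)" by (simp add: assms(4) nu_power[OF assms(5)])
  also have "\<dots> = nu (g l0 ^ c l0 * (\<Prod>l\<in>A-{l0}. g l ^ c l))" by (rule Q_nu_mult[OF q])
  also have "g l0 ^ c l0 * (\<Prod>l\<in>A-{l0}. g l ^ c l) = (\<Prod>l\<in>A. g l ^ c l)"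
    using assms by (simp add: prod.remove)
  finally show ?thesis .
qed

end



lemma rank_exists:
  fixes R :: "nat \<Rightarrow> nat \<Rightarrow> bool"
  assumes tot: "\<And>i j. R i j \<or> R j i" and tr: "\<And>i j k. R i j \<Longrightarrow> R j k \<Longrightarrow> R i k"
  shows "\<exists>r. r permutes {..<n} \<and> (\<forall>i<n. \<forall>j<n. r i < r j \<longrightarrow> R i j)"
proof -
  define lt where "lt i j \<longleftrightarrow> R i j \<and> (\<not> R j i \<or> i < j)" for i j
  have irr: "\<not> lt i i" for i unfolding lt_def by auto
  have trl: "lt i k" if "lt i j" "lt j k" for i j k
    using that tr unfolding lt_def by (metis order.strict_trans)
  have totl: "lt i j \<or> lt j i" if "i \<noteq> j" for i j
    using that tot unfolding lt_def by (metis linorder_neqE_nat)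
  define r where "r i = (if i < n then card {j. j < n \<and> lt j i} else i)" for i
  have mono: "r i < r j" if "i < n" "j < n" "lt i j" for i j
  proof -
    have "{l. l < n \<and> lt l i} \<subset> {l. l < n \<and> lt l j}"
      using that trl irr by blast
    hence "card {l. l < n \<and> lt l i} < card {l. l < n \<and> lt l j}"
      by (rule psubset_card_mono[rotated]) simp
    thus ?thesis using that by (simp add: r_def)
  qed
  have rlt: "r i < n" if "i < n" for i
  proof -
    have "{l. l < n \<and> lt l i} \<subseteq> {..<n} - {i}" using irr by auto
    hence "card {l. l < n \<and> lt l i} \<le> card ({..<n} - {i})" by (intro card_mono) auto
    also have "\<dots> < n" using that by simp
    finally show ?thesis using that by (simp add: r_def)
  qed
  have inj: "inj_on r {..<n}"
  proof (rule inj_onI)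
    fix i j assume "i \<in> {..<n}" "j \<in> {..<n}" "r i = r j"
    thus "i = j" using mono totl by (metis lessThan_iff less_irrefl)
  qed
  have img: "r ` {..<n} = {..<n}"
    by (rule endo_inj_surj) (use rlt inj in auto)
  have "bij_betw r {..<n} {..<n}" using inj img by (simp add: bij_betw_def)
  hence "r permutes {..<n}"
    by (rule bij_imp_permutes) (simp add: r_def)
  moreover have "\<forall>i<n. \<forall>j<n. r i < r j \<longrightarrow> R i j"
  proof (intro allI impI)
    fix i j assume h: "i < n" "j < n" "r i < r j"
    hence "i \<noteq> j" by auto
    hence "lt i j" using totl mono h by (metis less_asym)
    thus "R i j" unfolding lt_def by auto
  qed
  ultimately show ?thesis by blast
qed

definition vl :: "nat \<Rightarrow> (nat \<Rightarrow> nat) \<Rightarrow> nat list" where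
  "vl n d = rev (sort (map d [0..<n]))"

lemma vl_length[simp]: "length (vl n d) = n"
  by (simp add: vl_def)

lemma vl_mono: "i \<le> j \<Longrightarrow> j < n \<Longrightarrow> vl n d ! j \<le> vl n d ! i"
  unfolding vl_def by (rule sorted_rev_nth_mono) auto

lemma vl_perm: "\<exists>p. p permutes {..<n} \<and> (\<forall>l<n. d l = vl n d ! p l)"
proof -
  have "mset (map d [0..<n]) = mset (vl n d)" by (simp add: vl_def)
  then obtain p where p: "p permutes {..<length (vl n d)}" "permute_list p (vl n d) = map d [0..<n]"
    by (rule mset_eq_permutation)
  have "\<forall>l<n. d l = vl n d ! p l"
  proof (intro allI impI)
    fix l assume l: "l < n"
    have "d l = map d [0..<n] ! l" using l by simp
    also have "\<dots> = permute_list p (vl n d) ! l" using p(2) by simp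
    also have "\<dots> = vl n d ! p l" using p(1) l by (simp add: permute_list_nth)
    finally show "d l = vl n d ! p l" .
  qed
  thus ?thesis using p by auto
qed

lemma vl_invar:
  assumes "\<sigma> permutes {..<n}"
  shows "vl n (d \<circ> \<sigma>) = vl n d"
proof -
  have "map (d \<circ> \<sigma>) [0..<n] = permute_list \<sigma> (map d [0..<n])"
  proof (rule nth_equalityI)
    fix i assume "i < length (map (d \<circ> \<sigma>) [0..<n])"
    hence i: "i < n" by simp
    hence si: "\<sigma> i < n" using assms by (metis lessThan_iff permutes_in_image)
    show "map (d \<circ> \<sigma>) [0..<n] ! i = permute_list \<sigma> (map d [0..<n]) ! i"
      using i si assms by (simp add: permute_list_nth)
  qed simp
  hence "mset (map (d \<circ> \<sigma>) [0..<n]) = mset (map d [0..<n])"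
    using assms by simp
  hence "sort (map (d \<circ> \<sigma>) [0..<n]) = sort (map d [0..<n])"
    by (metis sorted_list_of_multiset_mset)
  thus ?thesis by (simp add: vl_def)
qed

lemma vl_inj:
  assumes "vl n d = vl n d'"
  shows "\<exists>\<sigma>. \<sigma> permutes {..<n} \<and> (\<forall>l<n. d' l = d (\<sigma> l))"
proof -
  have "sort (map d [0..<n]) = sort (map d' [0..<n])" using assms by (simp add: vl_def)
  hence "mset (map d' [0..<n]) = mset (map d [0..<n])" by (metis mset_sort)
  then obtain p where p: "p permutes {..<length (map d [0..<n])}"
     "permute_list p (map d [0..<n]) = map d' [0..<n]"
    by (rule mset_eq_permutation)
  have "\<forall>l<n. d' l = d (p l)"
  proof (intro allI impI)
    fix l assume l: "l < n"
    have "p l < n" using p(1) l by (metis lessThan_iff permutes_in_image length_map length_upt diff_zero)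
    have "map d' [0..<n] ! l = permute_list p (map d [0..<n]) ! l" using p by simp
    thus "d' l = d (p l)" using p(1) l \<open>p l < n\<close> by (simp add: permute_list_nth)
  qed
  thus ?thesis using p(1) by auto
qed

definition vw :: "nat \<Rightarrow> (nat \<Rightarrow> nat) \<Rightarrow> nat \<Rightarrow> nat" where
  "vw n d q = (if q < n then vl n d ! q else 0)"

definition cc :: "nat \<Rightarrow> (nat \<Rightarrow> nat) \<Rightarrow> nat \<Rightarrow> nat" where
  "cc n d k = vw n d k - vw n d (Suc k)"

lemma vw_mono: "q \<le> q' \<Longrightarrow> vw n d q' \<le> vw n d q"
  unfolding vw_def using vl_mono by auto

lemma vw_tele: "q \<le> n \<Longrightarrow> vw n d q = (\<Sum>k\<in>{q..<n}. cc n d k)"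
proof (induction "n - q" arbitrary: q)
  case 0 thus ?case by (simp add: vw_def)
next
  case (Suc m)
  hence q: "q < n" by simp
  have "{q..<n} = insert q {Suc q..<n}" using q by auto
  hence "(\<Sum>k\<in>{q..<n}. cc n d k) = cc n d q + (\<Sum>k\<in>{Suc q..<n}. cc n d k)" by simp
  also have "(\<Sum>k\<in>{Suc q..<n}. cc n d k) = vw n d (Suc q)" using Suc q by simp
  also have "cc n d q + vw n d (Suc q) = vw n d q"
    unfolding cc_def using vw_mono[of q "Suc q" n d] by simp
  finally show ?case by simp
qed

lemma vl_tele: "q < n \<Longrightarrow> vl n d ! q = (\<Sum>k\<in>{q..<n}. cc n d k)"
  using vw_tele[of q n d] by (simp add: vw_def)

lemma vl_eq_from_cc:
  assumes "\<forall>k<n. cc n d k = cc n d' k"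
  shows "vl n d = vl n d'"
  by (rule nth_equalityI) (use assms in \<open>auto simp: vl_tele\<close>)

lemma prod_power_distrib': "prod f A ^ n = prod (\<lambda>x. (f x) ^ n) A"
  for f :: "'b \<Rightarrow> 'a::comm_monoid_mult"
  by (induct A rule: infinite_finite_induct) (auto simp add: power_mult_distrib)

lemma layer:
  fixes x :: "nat \<Rightarrow> 'a::{comm_semiring_0, comm_monoid_mult}"
  assumes "\<And>l. l < n \<Longrightarrow> \<rho> l < n" and v: "\<And>q. q < n \<Longrightarrow> v q = (\<Sum>k\<in>{q..<n}. c k)"
  shows "(\<Prod>l<n. x l ^ v (\<rho> l)) = (\<Prod>k<n. (prod x {l. l < n \<and> \<rho> l \<le> k}) ^ c k)"
proof -
  have "(\<Prod>l<n. x l ^ v (\<rho> l)) = (\<Prod>l<n. \<Prod>k<n. (if \<rho> l \<le> k then x l ^ c k else 1))"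
  proof (rule prod.cong[OF refl])
    fix l assume "l \<in> {..<n}"
    hence "x l ^ v (\<rho> l) = (\<Prod>k\<in>{\<rho> l..<n}. x l ^ c k)" using assms by (simp add: power_sum)
    also have "{\<rho> l..<n} = {..<n} \<inter> {k. \<rho> l \<le> k}" by auto
    also have "(\<Prod>k\<in>{..<n} \<inter> {k. \<rho> l \<le> k}. x l ^ c k) = (\<Prod>k<n. (if \<rho> l \<le> k then x l ^ c k else 1))"
      by (subst prod.inter_restrict) auto
    finally show "x l ^ v (\<rho> l) = (\<Prod>k<n. (if \<rho> l \<le> k then x l ^ c k else 1))" .
  qed
  also have "\<dots> = (\<Prod>k<n. \<Prod>l<n. (if \<rho> l \<le> k then x l ^ c k else 1))" by (rule prod.swap)
  also have "\<dots> = (\<Prod>k<n. (prod x {l. l < n \<and> \<rho> l \<le> k}) ^ c k)"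
  proof (rule prod.cong[OF refl])
    fix k
    have "(\<Prod>l<n. (if \<rho> l \<le> k then x l ^ c k else 1)) = (\<Prod>l\<in>{..<n} \<inter> {l. \<rho> l \<le> k}. x l ^ c k)"
      by (subst prod.inter_restrict) auto
    also have "{..<n} \<inter> {l. \<rho> l \<le> k} = {l. l < n \<and> \<rho> l \<le> k}" by auto
    also have "(\<Prod>l\<in>{l. l < n \<and> \<rho> l \<le> k}. x l ^ c k) = (prod x {l. l < n \<and> \<rho> l \<le> k}) ^ c k"
      by (rule prod_power_distrib'[symmetric])
    finally show "(\<Prod>l<n. (if \<rho> l \<le> k then x l ^ c k else 1)) = (prod x {l. l < n \<and> \<rho> l \<le> k}) ^ c k" .
  qed
  finally show ?thesis .
qed




lemma perm_lt: "\<rho> permutes {..<n} \<Longrightarrow> l < n \<Longrightarrow> \<rho> l < (n::nat)"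
  by (metis lessThan_iff permutes_in_image)

lemma layer_card:
  assumes "\<rho> permutes {..<n}" "k < n"
  shows "card {l. l < n \<and> \<rho> l \<le> k} = Suc k"
proof -
  have inj: "inj_on \<rho> {l. l < n \<and> \<rho> l \<le> k}"
    using permutes_inj[OF assms(1)] by (auto intro: inj_on_subset)
  have "\<rho> ` {l. l < n \<and> \<rho> l \<le> k} = {..k}"
  proof
    show "\<rho> ` {l. l < n \<and> \<rho> l \<le> k} \<subseteq> {..k}" by auto
    show "{..k} \<subseteq> \<rho> ` {l. l < n \<and> \<rho> l \<le> k}"
    proof
      fix y assume "y \<in> {..k}"
      hence y: "y < n" "y \<le> k" using assms by auto
      have "y \<in> \<rho> ` {..<n}" using permutes_image[OF assms(1)] y by auto
      then obtain l where "l < n" "\<rho> l = y" by auto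
      thus "y \<in> \<rho> ` {l. l < n \<and> \<rho> l \<le> k}" using y by auto
    qed
  qed
  thus ?thesis using card_image[OF inj] by simp
qed

lemma sum_if_le: "q < (n::nat) \<Longrightarrow> (\<Sum>k\<in>{q..<n}. c k) = (\<Sum>k<n. if q \<le> k then c k else (0::nat))"
proof -
  assume "q < n"
  have "{q..<n} = {..<n} \<inter> {k. q \<le> k}" by auto
  moreover have "(\<Sum>k\<in>{..<n} \<inter> {k. q \<le> k}. c k) = (\<Sum>k<n. if k \<in> {k. q \<le> k} then c k else 0)"
    by (subst sum.inter_restrict) auto
  ultimately show ?thesis by simp
qed

context
  assumes ST: "supertropical TYPE('a::{comm_semiring_0, comm_monoid_mult})"
begin

lemma nu_power_eq: "nu (a::'a) = nu b \<Longrightarrow> nu (a ^ k) = nu (b ^ k)"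
  using nu_prod_eq[OF ST, of "{..<k}" "\<lambda>_. a" "\<lambda>_. b"] by simp

lemma level:
  fixes x :: "nat \<Rightarrow> 'a"
  assumes r: "r permutes {..<n}" and mono: "\<forall>i<n. \<forall>j<n. r i < r j \<longrightarrow> ge (x i) (x j)"
    and k: "k < n" and S: "S \<subseteq> {..<n}" "card S = Suc k"
    and T: "T = {l. l < n \<and> r l \<le> k}"
  shows "ge (prod x T) (prod x S)"
    and "(\<forall>i\<in>T. \<forall>j. j < n \<longrightarrow> j \<notin> T \<longrightarrow> nu (x i) \<noteq> nu (x j)) \<Longrightarrow> S \<noteq> T \<Longrightarrow> sdom (prod x T) (prod x S)"
proof -
  have fS: "finite S" using S finite_subset by blast
  have fT: "finite T" using T by auto
  have cT: "card T = Suc k" using layer_card[OF r k] T by simp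
  have "card (S - T) = card (T - S)"
    using fS fT cT S by (simp add: card_Diff_subset_Int Int_commute)
  then obtain f where f: "bij_betw f (S - T) (T - S)"
    using finite_same_card_bij fS fT by blast
  have pS: "prod x S = prod x (S \<inter> T) * prod x (S - T)" using fS by (rule prod.Int_Diff)
  have "prod x T = prod x (T \<inter> S) * prod x (T - S)" using fT by (rule prod.Int_Diff)
  also have "prod x (T - S) = prod (\<lambda>s. x (f s)) (S - T)" by (rule prod.reindex_bij_betw[OF f, symmetric])
  finally have pT: "prod x T = prod x (S \<inter> T) * prod (\<lambda>s. x (f s)) (S - T)" by (simp add: Int_commute)
  have fs: "f s \<in> T - S" if "s \<in> S - T" for s using f that by (auto simp: bij_betw_def)
  have gef: "ge (x (f s)) (x s)" if s: "s \<in> S - T" for s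
  proof -
    have "f s \<in> T" "f s < n" using fs[OF s] T by auto
    moreover have "s < n" "r s > k" using s S T by auto
    ultimately have "r (f s) < r s" using T by auto
    thus ?thesis using mono \<open>f s < n\<close> \<open>s < n\<close> by blast
  qed
  show "ge (prod x T) (prod x S)"
    unfolding pS pT by (rule ge_mult2[OF ST], rule ge_prod[OF ST], rule gef)
  assume nt: "\<forall>i\<in>T. \<forall>j. j < n \<longrightarrow> j \<notin> T \<longrightarrow> nu (x i) \<noteq> nu (x j)" and ne: "S \<noteq> T"
  have "S - T \<noteq> {}"
  proof
    assume "S - T = {}"
    hence "S \<subseteq> T" by auto
    thus False using card_subset_eq[OF fT _] cT S ne by auto
  qed
  then obtain s0 where s0: "s0 \<in> S - T" by auto
  have domf: "sdom (x (f s)) (x s)" if s: "s \<in> S - T" for s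
  proof -
    have "nu (x (f s)) \<noteq> nu (x s)" using nt fs[OF s] s S by auto
    thus ?thesis using ge_strict[OF ST gef[OF s]] unfolding sdom_def by simp
  qed
  have "sdom (prod (\<lambda>s. x (f s)) (S - T)) (prod x (S - T))"
    by (rule sdom_prod[OF ST _ s0]) (use fS domf s0 in \<open>auto simp: sdom_def wdom_def\<close>)
  hence "sdom (prod (\<lambda>s. x (f s)) (S - T) * prod x (S \<inter> T)) (prod x (S - T) * prod x (S \<inter> T))"
    by (rule sdom_mult[OF ST])
  thus "sdom (prod x T) (prod x S)" unfolding pS pT by (simp add: mult.commute)
qed

end



context
  assumes ST: "supertropical TYPE('a::{comm_semiring_0, comm_monoid_mult})"
begin

lemma orbit_main:
  fixes x :: "nat \<Rightarrow> 'a"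
  shows "(\<Sum>e\<in>(\<lambda>\<sigma>. d \<circ> \<sigma>) ` {\<sigma>. \<sigma> permutes {..<n}}. \<Prod>j<n. x j ^ e j)
         = (\<Prod>k<n. elem_sym n (Suc k) x ^ cc n d k)"
proof -
  define Orb where "Orb = (\<lambda>\<sigma>. d \<circ> \<sigma>) ` {\<sigma>. \<sigma> permutes {..<n}}"
  define v where "v = vl n d"
  define c where "c = cc n d"
  have vt: "\<And>q. q < n \<Longrightarrow> v ! q = (\<Sum>k\<in>{q..<n}. c k)"
    unfolding v_def c_def by (rule vl_tele)
  obtain r where r: "r permutes {..<n}" and mono: "\<forall>i<n. \<forall>j<n. r i < r j \<longrightarrow> ge (x i) (x j)"
    using rank_exists[of "\<lambda>i j. ge (x i) (x j)" n] ge_total[OF ST] ge_trans[OF ST] by blast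
  obtain p where p: "p permutes {..<n}" "\<forall>l<n. d l = v ! (p l)"
    using vl_perm unfolding v_def by blast
  define T where "T k = {l. l < n \<and> r l \<le> k}" for k
  define tk where "tk k = prod x (T k)" for k
  define m where "m = (\<Prod>k<n. tk k ^ c k)"
  define xe where "xe e = (\<Prod>j<n. x j ^ e j)" for e
  define E where "E k = elem_sym n (Suc k) x" for k
  define SS where "SS k = {S. S \<subseteq> {..<n} \<and> card S = Suc k}" for k
  have Edef: "E k = (\<Sum>S\<in>SS k. prod x S)" for k
    unfolding E_def SS_def elem_sym_def by simp
  have fSS: "finite (SS k)" for k
    by (rule finite_subset[of _ "Pow {..<n}"]) (auto simp: SS_def)
  have TSS: "T k \<in> SS k" if "k < n" for k
    using layer_card[OF r that] unfolding SS_def T_def by auto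
  have rep: "xe e = (\<Prod>k<n. prod x {l. l < n \<and> \<rho> l \<le> k} ^ c k)"
    if rho: "\<rho> permutes {..<n}" and ev: "\<forall>l<n. e l = v ! (\<rho> l)" for \<rho> e
  proof -
    have "xe e = (\<Prod>l<n. x l ^ (\<lambda>q. v ! q) (\<rho> l))" unfolding xe_def using ev by simp
    also have "\<dots> = (\<Prod>k<n. prod x {l. l < n \<and> \<rho> l \<le> k} ^ c k)"
      by (rule layer) (use rho vt perm_lt in auto)
    finally show ?thesis .
  qed
  have Oe: "\<exists>\<sigma>. \<sigma> permutes {..<n} \<and> e = d \<circ> \<sigma>" if "e \<in> Orb" for e
    using that unfolding Orb_def by auto
  have Oev: "\<exists>\<rho>. \<rho> permutes {..<n} \<and> (\<forall>l<n. e l = v ! (\<rho> l))" if eO: "e \<in> Orb" for e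
  proof -
    obtain \<sigma> where s: "\<sigma> permutes {..<n}" "e = d \<circ> \<sigma>" using Oe[OF eO] by blast
    have "p \<circ> \<sigma> permutes {..<n}" using permutes_compose[OF s(1) p(1)] .
    moreover have "\<forall>l<n. e l = v ! ((p \<circ> \<sigma>) l)"
      using s p(2) by (simp add: perm_lt)
    ultimately show ?thesis by blast
  qed
  define \<sigma>s where "\<sigma>s = inv p \<circ> r"
  have \<sigma>s: "\<sigma>s permutes {..<n}" unfolding \<sigma>s_def by (rule permutes_compose[OF r permutes_inv[OF p(1)]])
  define es where "es = d \<circ> \<sigma>s"
  have esO: "es \<in> Orb" unfolding es_def Orb_def using \<sigma>s by blast
  have esv: "es l = v ! (r l)" if "l < n" for l
  proof -
    have "r l < n" using r that by (simp add: perm_lt)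
    hence "inv p (r l) < n" using permutes_inv[OF p(1)] by (simp add: perm_lt)
    hence "d (inv p (r l)) = v ! (p (inv p (r l)))" using p(2) by blast
    thus ?thesis unfolding es_def \<sigma>s_def using permutes_inverses(1)[OF p(1)] by simp
  qed
  have xes: "xe es = m"
    unfolding m_def tk_def T_def using rep[OF r] esv by simp
  have fO: "finite Orb" unfolding Orb_def by (rule finite_imageI) (simp add: finite_permutations)
  have lev1: "ge (tk k) (prod x S)" if "k < n" "S \<in> SS k" for k S
    using level(1)[OF ST r mono that(1), of S "T k"] that unfolding SS_def tk_def T_def by auto
  have lev2: "sdom (tk k) (prod x S)"
    if "k < n" "S \<in> SS k" "\<forall>i\<in>T k. \<forall>j. j < n \<longrightarrow> j \<notin> T k \<longrightarrow> nu (x i) \<noteq> nu (x j)" "S \<noteq> T k" for k S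
    using level(2)[OF ST r mono that(1), of S "T k"] that unfolding SS_def tk_def T_def by auto
  have Sr: "{l. l < n \<and> \<rho> l \<le> k} \<in> SS k" if "\<rho> permutes {..<n}" "k < n" for \<rho> k
    using layer_card[OF that] unfolding SS_def by auto
  have geO: "ge (xe es) (xe e)" if eO: "e \<in> Orb" for e
  proof -
    obtain \<rho> where rho: "\<rho> permutes {..<n}" "\<forall>l<n. e l = v ! (\<rho> l)" using Oev[OF eO] by blast
    have "ge m (\<Prod>k<n. prod x {l. l < n \<and> \<rho> l \<le> k} ^ c k)"
      unfolding m_def by (rule ge_prod[OF ST], rule ge_power[OF ST], rule lev1) (use Sr[OF rho(1)] in auto)
    thus ?thesis using rep[OF rho] xes by simp
  qed
  have EQ: "Q (E k) (tk k)" if "k < n" for k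
    using sum_top(3)[OF ST fSS TSS[OF that], of "prod x"] lev1[OF that] unfolding Edef Q_def tk_def
    by blast
  show ?thesis
  proof (cases "\<exists>k<n. c k > 0 \<and> (\<exists>i\<in>T k. \<exists>j. j < n \<and> j \<notin> T k \<and> nu (x i) = nu (x j))")
    case True
    then obtain k i j where k: "k < n" "c k > 0" and i: "i \<in> T k" and j: "j < n" "j \<notin> T k"
      and nij: "nu (x i) = nu (x j)" by blast
    have in_: "i < n" using i T_def by auto
    define \<tau> where "\<tau> = transpose i j"
    have tau: "\<tau> permutes {..<n}" unfolding \<tau>_def by (rule permutes_swap_id) (use in_ j in auto)
    have nut: "nu (x (\<tau> l)) = nu (x l)" for l
      unfolding \<tau>_def using nij by (cases "l = i"; cases "l = j") auto
    define S' where "S' = \<tau> ` T k"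
    have injt: "inj_on \<tau> (T k)" using permutes_inj[OF tau] by (auto intro: inj_on_subset)
    have S'SS: "S' \<in> SS k"
    proof -
      have "S' \<subseteq> {..<n}" unfolding S'_def T_def using tau by (auto simp: perm_lt)
      moreover have "card S' = card (T k)" unfolding S'_def using card_image[OF injt] .
      ultimately show ?thesis using TSS[OF k(1)] unfolding SS_def by auto
    qed
    have S'ne: "S' \<noteq> T k"
    proof -
      have "j \<in> S'" unfolding S'_def \<tau>_def using i by (metis image_eqI transpose_apply_first)
      thus ?thesis using j by auto
    qed
    have "prod x S' = prod (x \<circ> \<tau>) (T k)" unfolding S'_def by (rule prod.reindex[OF injt])
    hence nuS': "nu (prod x S') = nu (tk k)" unfolding tk_def
      using nu_prod_eq[OF ST, of "T k" "x \<circ> \<tau>" x] nut by simp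
    have Ek: "E k = nu (tk k)"
      unfolding Edef tk_def
      by (rule sum_top(2)[OF ST fSS TSS[OF k(1)] _ S'SS S'ne nuS'[unfolded tk_def]])
         (use lev1[OF k(1)] in \<open>auto simp: tk_def\<close>)
    have B: "(\<Prod>l<n. E l ^ c l) = nu m"
      unfolding m_def by (rule Q_prod_ghost[OF ST, of "{..<n}" k E tk c]) (use k EQ Ek in auto)
    define e' where "e' = d \<circ> (\<sigma>s \<circ> \<tau>)"
    have e'Orb: "e' \<in> Orb" unfolding e'_def Orb_def using permutes_compose[OF tau \<sigma>s] by blast
    have e'v: "e' l = v ! (r (\<tau> l))" if "l < n" for l
    proof -
      have "\<tau> l < n" using tau that by (simp add: perm_lt)
      thus ?thesis using esv unfolding e'_def es_def by simp
    qed
    have "xe e' = (\<Prod>l<n. x l ^ v ! (r (\<tau> l)))" unfolding xe_def using e'v by simp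
    also have "\<dots> = (\<Prod>l<n. (\<lambda>l. x (\<tau> l) ^ v ! (r l)) (\<tau> l))" by (simp add: \<tau>_def)
    also have "\<dots> = (\<Prod>l<n. x (\<tau> l) ^ v ! (r l))"
      by (rule prod.reindex_bij_betw) (use tau in \<open>simp add: permutes_imp_bij\<close>)
    finally have "nu (xe e') = nu (\<Prod>l<n. x l ^ v ! (r l))"
      using nu_prod_eq[OF ST, of "{..<n}" "\<lambda>l. x (\<tau> l) ^ v ! (r l)" "\<lambda>l. x l ^ v ! (r l)"]
        nu_power_eq[OF ST nut] by simp
    also have "(\<Prod>l<n. x l ^ v ! (r l)) = xe es" unfolding xe_def using esv by simp
    finally have nue': "nu (xe e') = nu (xe es)" .
    have "e' \<noteq> es"
    proof
      assume eq: "e' = es"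
      have ri: "r i \<le> k" using i T_def by auto
      have rj: "k < r j" "r j < n" using j T_def r by (auto simp: perm_lt)
      have "c k = vw n d k - vw n d (Suc k)" unfolding c_def cc_def ..
      hence lt: "vw n d (Suc k) < vw n d k" using k(2) by simp
      have "v ! (r j) = vw n d (r j)" using rj unfolding vw_def v_def by simp
      also have "\<dots> \<le> vw n d (Suc k)" using rj by (intro vw_mono) simp
      also have "\<dots> < vw n d k" by (rule lt)
      also have "\<dots> \<le> vw n d (r i)" using ri by (rule vw_mono)
      also have "\<dots> = v ! (r i)" using rj ri unfolding vw_def v_def by simp
      finally have "v ! (r j) < v ! (r i)" .
      moreover have "e' i = v ! (r j)" using e'v[OF in_] unfolding \<tau>_def by simp
      moreover have "es i = v ! (r i)" using esv[OF in_] .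
      ultimately show False using eq by simp
    qed
    have A: "(\<Sum>e\<in>Orb. xe e) = nu m"
      using sum_top(2)[OF ST fO esO, of xe e'] geO e'Orb \<open>e' \<noteq> es\<close> nue' xes by simp
    show ?thesis using A B unfolding Orb_def xe_def E_def c_def by simp
  next
    case False
    hence nt: "\<forall>i\<in>T k. \<forall>j. j < n \<longrightarrow> j \<notin> T k \<longrightarrow> nu (x i) \<noteq> nu (x j)" if "k < n" "c k > 0" for k
      using that by blast
    have Bk: "E k ^ c k = tk k ^ c k" if k: "k < n" for k
    proof (cases "c k = 0")
      case False
      have "E k = tk k + (\<Sum>S\<in>SS k - {T k}. prod x S)"
        unfolding Edef tk_def using fSS TSS[OF k] by (simp add: sum.remove)
      also have "\<dots> = tk k"
        by (rule absorb_sum[OF ST]) (use lev2[OF k _ nt[OF k]] False in \<open>auto simp: sdom_def\<close>)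
      finally show ?thesis by simp
    qed simp
    have B: "(\<Prod>l<n. E l ^ c l) = m" unfolding m_def using Bk by simp
    have domO: "xe es + xe e = xe es" if eO: "e \<in> Orb - {es}" for e
    proof -
      obtain \<sigma> where s: "\<sigma> permutes {..<n}" "e = d \<circ> \<sigma>" using Oe eO by blast
      define \<rho> where "\<rho> = p \<circ> \<sigma>"
      have rho: "\<rho> permutes {..<n}" unfolding \<rho>_def using permutes_compose[OF s(1) p(1)] .
      have ev: "\<forall>l<n. e l = v ! (\<rho> l)" unfolding \<rho>_def using s p(2) by (simp add: perm_lt)
      define Sr where "Sr k = {l. l < n \<and> \<rho> l \<le> k}" for k
      have "\<exists>k<n. c k > 0 \<and> Sr k \<noteq> T k"
      proof (rule ccontr)
        assume "\<not> ?thesis"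
        hence same: "\<And>k. k < n \<Longrightarrow> c k > 0 \<Longrightarrow> Sr k = T k" by blast
        have "e = es"
        proof
          fix l show "e l = es l"
          proof (cases "l < n")
            case True
            have rl: "\<rho> l < n" "r l < n" using True rho r by (auto simp: perm_lt)
            have "e l = (\<Sum>k<n. if \<rho> l \<le> k then c k else 0)"
              using ev True vt[OF rl(1)] sum_if_le[OF rl(1)] by simp
            also have "\<dots> = (\<Sum>k<n. if r l \<le> k then c k else 0)"
            proof (rule sum.cong[OF refl])
              fix k assume "k \<in> {..<n}"
              hence kn: "k < n" by simp
              show "(if \<rho> l \<le> k then c k else 0) = (if r l \<le> k then c k else 0)"
              proof (cases "c k > 0")
                case True
                hence "l \<in> Sr k \<longleftrightarrow> l \<in> T k" using same[OF kn] by simp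
                thus ?thesis using \<open>l < n\<close> unfolding Sr_def T_def by auto
              qed simp
            qed
            also have "\<dots> = es l"
              using esv[OF True] vt[OF rl(2)] sum_if_le[OF rl(2)] by simp
            finally show ?thesis .
          next
            case False
            have "e l = d l" using s permutes_not_in[OF s(1)] False by simp
            moreover have "es l = d l" unfolding es_def using permutes_not_in[OF \<sigma>s] False by simp
            ultimately show ?thesis by simp
          qed
        qed
        thus False using eO by simp
      qed
      then obtain k0 where k0: "k0 < n" "c k0 > 0" "Sr k0 \<noteq> T k0" by blast
      have SrSS: "Sr k \<in> SS k" if "k < n" for k unfolding Sr_def using Sr[OF rho that] .
      have "sdom m (\<Prod>k<n. prod x (Sr k) ^ c k)"
        unfolding m_def
      proof (rule sdom_prod[OF ST, of "{..<n}" k0 "\<lambda>k. tk k ^ c k" "\<lambda>k. prod x (Sr k) ^ c k"])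
        show "finite {..<n}" by simp
        show "k0 \<in> {..<n}" using k0 by simp
        show "sdom (tk k0 ^ c k0) (prod x (Sr k0) ^ c k0)"
          using sdom_power[OF ST lev2[OF k0(1) SrSS[OF k0(1)] nt[OF k0(1,2)] k0(3)] k0(2)] .
        fix k assume "k \<in> {..<n}"
        hence kn: "k < n" by simp
        show "wdom (tk k ^ c k) (prod x (Sr k) ^ c k)"
        proof (cases "c k > 0 \<and> Sr k \<noteq> T k")
          case True
          have "sdom (tk k ^ c k) (prod x (Sr k) ^ c k)"
            using sdom_power[OF ST lev2[OF kn SrSS[OF kn] nt[OF kn] ] ] True by blast
          thus ?thesis unfolding sdom_def wdom_def by simp
        next
          case False
          thus ?thesis unfolding wdom_def tk_def by auto
        qed
      qed
      hence "sdom (xe es) (xe e)" using xes rep[OF rho ev] unfolding Sr_def by simp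
      thus ?thesis unfolding sdom_def .
    qed
    have "(\<Sum>e\<in>Orb. xe e) = xe es + (\<Sum>e\<in>Orb - {es}. xe e)" using fO esO by (simp add: sum.remove)
    also have "\<dots> = xe es" by (rule absorb_sum[OF ST]) (use domO in auto)
    finally have A: "(\<Sum>e\<in>Orb. xe e) = m" using xes by simp
    show ?thesis using A B unfolding Orb_def xe_def E_def c_def by simp
  qed
qed

end



theorem theorem5p9:
  assumes "supertropical TYPE('a::{comm_semiring_0, comm_monoid_mult})"
  shows "fully_elementary TYPE('a)"
  unfolding fully_elementary_def n_elementary_def
proof (intro allI impI)
  note ST = assms
  fix n :: nat and P :: "('a \<times> (nat \<Rightarrow> nat)) set"
  assume sym: "symmetric_expr n P"
  have fP: "finite P" using sym unfolding symmetric_expr_def by blast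
  define \<phi> where "\<phi> = (\<lambda>(a::'a, d::nat\<Rightarrow>nat). (a, \<lambda>j. if j < n then cc n d j else d j))"
  define R where "R = \<phi> ` P"
  define Orb where "Orb d = (\<lambda>\<sigma>. d \<circ> \<sigma>) ` {\<sigma>. \<sigma> permutes {..<n}}" for d :: "nat \<Rightarrow> nat"
  have fiber: "{q. q \<in> P \<and> \<phi> q = \<phi> (a, d)} = (\<lambda>e. (a, e)) ` Orb d" if ad: "(a, d) \<in> P" for a d
  proof
    show "(\<lambda>e. (a, e)) ` Orb d \<subseteq> {q. q \<in> P \<and> \<phi> q = \<phi> (a, d)}"
    proof
      fix q assume "q \<in> (\<lambda>e. (a, e)) ` Orb d"
      then obtain \<sigma> where s: "\<sigma> permutes {..<n}" "q = (a, d \<circ> \<sigma>)" unfolding Orb_def by auto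
      have "q \<in> P" using sym ad s unfolding symmetric_expr_def by blast
      moreover have "cc n (d \<circ> \<sigma>) = cc n d"
        unfolding cc_def vw_def vl_invar[OF s(1), of d] by (rule refl)
      moreover have "(d \<circ> \<sigma>) j = d j" if "\<not> j < n" for j
        using permutes_not_in[OF s(1)] that by simp
      ultimately show "q \<in> {q. q \<in> P \<and> \<phi> q = \<phi> (a, d)}"
        using s unfolding \<phi>_def by auto
    qed
    show "{q. q \<in> P \<and> \<phi> q = \<phi> (a, d)} \<subseteq> (\<lambda>e. (a, e)) ` Orb d"
    proof
      fix q assume "q \<in> {q. q \<in> P \<and> \<phi> q = \<phi> (a, d)}"
      then obtain a' d' where q: "q = (a', d')" "\<phi> (a', d') = \<phi> (a, d)" by (cases q) auto
      hence a': "a' = a" and fe: "(\<lambda>j. if j < n then cc n d' j else d' j) = (\<lambda>j. if j < n then cc n d j else d j)"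
        unfolding \<phi>_def by auto
      have ccq: "\<forall>k<n. cc n d k = cc n d' k" using fe by (metis (mono_tags, lifting))
      have tl: "d' j = d j" if "\<not> j < n" for j using fun_cong[OF fe, of j] that by simp
      obtain \<sigma> where s: "\<sigma> permutes {..<n}" "\<forall>l<n. d' l = d (\<sigma> l)"
        using vl_inj[OF vl_eq_from_cc[OF ccq]] by blast
      have "d' = d \<circ> \<sigma>"
      proof
        fix l show "d' l = (d \<circ> \<sigma>) l"
          using s tl permutes_not_in[OF s(1)] by (cases "l < n") auto
      qed
      thus "q \<in> (\<lambda>e. (a, e)) ` Orb d" using q a' s unfolding Orb_def by auto
    qed
  qed
  show "\<exists>R::('a \<times> (nat \<Rightarrow> nat)) set. finite R \<and>
           (\<forall>x. poly_eval P n x = poly_eval R n (\<lambda>i. elem_sym n (Suc i) x))"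
  proof (intro exI conjI allI)
    show "finite R" unfolding R_def using fP by simp
    fix x :: "nat \<Rightarrow> 'a"
    define f where "f = (\<lambda>(a::'a, d::nat\<Rightarrow>nat). a * (\<Prod>j<n. x j ^ d j))"
    have "poly_eval P n x = sum f P" unfolding poly_eval_def f_def ..
    also have "\<dots> = (\<Sum>r\<in>R. sum f {q. q \<in> P \<and> \<phi> q = r})"
      unfolding R_def by (rule sum.image_gen[OF fP])
    also have "\<dots> = (\<Sum>r\<in>R. (case r of (a, c) \<Rightarrow> a * (\<Prod>j<n. elem_sym n (Suc j) x ^ c j)))"
    proof (rule sum.cong[OF refl])
      fix r assume "r \<in> R"
      then obtain a d where ad: "(a, d) \<in> P" "r = \<phi> (a, d)" unfolding R_def by auto
      have inj: "inj_on (\<lambda>e. (a, e)) (Orb d)" by (auto intro: inj_onI)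
      have "sum f {q. q \<in> P \<and> \<phi> q = r} = sum f ((\<lambda>e. (a, e)) ` Orb d)" using fiber[OF ad(1)] ad(2) by simp
      also have "\<dots> = (\<Sum>e\<in>Orb d. a * (\<Prod>j<n. x j ^ e j))"
        by (subst sum.reindex[OF inj]) (simp add: f_def)
      also have "\<dots> = a * (\<Sum>e\<in>Orb d. \<Prod>j<n. x j ^ e j)" by (simp add: sum_distrib_left)
      also have "(\<Sum>e\<in>Orb d. \<Prod>j<n. x j ^ e j) = (\<Prod>k<n. elem_sym n (Suc k) x ^ cc n d k)"
        unfolding Orb_def by (rule orbit_main[OF ST])
      also have "a * (\<Prod>k<n. elem_sym n (Suc k) x ^ cc n d k) =
                 (case r of (a, c) \<Rightarrow> a * (\<Prod>j<n. elem_sym n (Suc j) x ^ c j))"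
        unfolding ad(2) \<phi>_def by simp
      finally show "sum f {q. q \<in> P \<and> \<phi> q = r} = (case r of (a, c) \<Rightarrow> a * (\<Prod>j<n. elem_sym n (Suc j) x ^ c j))" .
    qed
    also have "\<dots> = poly_eval R n (\<lambda>i. elem_sym n (Suc i) x)" unfolding poly_eval_def ..
    finally show "poly_eval P n x = poly_eval R n (\<lambda>i. elem_sym n (Suc i) x)" .
  qed
qed


end
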